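(* Let $\mathfrak{g}$ be a $6$-dimensional real Lie algebra with a coherent splitting $\mathfrak{g}^*=V_1\oplus V_2$ such that $h^{0,4}=0$ and $h^{0,3}=0$. Then $\mathfrak{g}$ has no half-flat structure.
   Context: Let $d\colon\Lambda^k\mathfrak{g}^*\to\Lambda^{k+1}\mathfrak{g}^*$ be the Chevalley–Eilenberg differential ($d\alpha(X,Y)=-\alpha([X,Y])$ on $1$-forms, extended as a derivation). An $\mathrm{SU}(3)$-structure on a $6$-dimensional Lie algebra $\mathfrak{g}$ is a pair $(\omega,\psi^+)\in\Lambda^2\mathfrak{g}^*\times\Lambda^3\mathfrak{g}^*$ such that for some basis $\eta^1,\dots,\eta^6$ of $\mathfrak{g}^*$ and some $3$-form $\psi^-$ one has $\omega=\eta^{12}+\eta^{34}+\eta^{56}$ and $\psi^++i\psi^-=(\eta^1+i\eta^2)\wedge(\eta^3+i\eta^4)\wedge(\eta^5+i\eta^6)$. It is half-flat if $d\omega\wedge\omega=0$ and $d\psi^+=0$. A coherent splitting of $\mathfrak{g}$ is a decomposition $\mathfrak{g}^*=V_1\oplus V_2$ into vector subspaces with $\dim V_1=2$ such that, setting $\Lambda^{p,q}=\Lambda^pV_1\otimes\Lambda^qV_2\subset\Lambda^{p+q}\mathfrak{g}^*$, one has $d(\Lambda^{p,q})\subset\Lambda^{p+1,q}+\Lambda^{p+2,q-1}$ for all $p,q$. For such a splitting let $F^k_p=\bigoplus_{p'\ge p}\Lambda^{p',k-p'}$, let $Z^k$ be the space of closed $k$-forms, $H^k$ the $k$-th cohomology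 of $(\Lambda^*\mathfrak{g}^*,d)$, and $H^k_p\subset H^k$ the image of $Z^k\cap F^k_p$. Define $H^{p,q}=H^{p+q}_p/H^{p+q}_{p+1}$ and $h^{p,q}=\dim H^{p,q}$. *)

theory Defs
  imports "HOL-Analysis.Analysis" "HOL-Library.Numeral_Type"
begin

text \<open>Fix a basis e_0,...,e_5 of the 6-dimensional real Lie algebra g, indexed by the
  type 6, with dual basis e^0,...,e^5 of g*. A (not necessarily homogeneous) element of
  the exterior algebra of g* is stored by its coefficients on the monomials
  e^I = e^(i_1) wedge ... wedge e^(i_k), where I = {i_1 < ... < i_k}.\<close>

type_synonym form = "real ^ (6 set)"

definition eform :: "6 set \<Rightarrow> form" where
  "eform I = axis I 1"

definition one_form :: form where
  "one_form = eform {}"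

definition forms_deg :: "nat \<Rightarrow> form set" where
  "forms_deg k = {\<alpha>. \<forall>I. card I \<noteq> k \<longrightarrow> \<alpha> $ I = 0}"

definition inv_count :: "6 set \<Rightarrow> 6 set \<Rightarrow> nat" where
  "inv_count I J = card {(i, j). i \<in> I \<and> j \<in> J \<and> j < i}"

definition wedge :: "form \<Rightarrow> form \<Rightarrow> form" where
  "wedge \<alpha> \<beta> = (\<chi> K. \<Sum>I\<in>Pow K. (-1) ^ inv_count I (K - I) * (\<alpha> $ I) * (\<beta> $ (K - I)))"

definition wedgel :: "form list \<Rightarrow> form" where
  "wedgel xs = foldr wedge xs one_form"

text \<open>Lie algebra given by structure constants: [e_i, e_j] = sum_k c i j k e_k.\<close>
definition lie_algebra :: "(6 \<Rightarrow> 6 \<Rightarrow> 6 \<Rightarrow> real) \<Rightarrow> bool" where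
  "lie_algebra c \<longleftrightarrow>
     (\<forall>i j k. c i j k = - c j i k) \<and>
     (\<forall>i j k m. (\<Sum>l\<in>UNIV. c i j l * c l k m + c j k l * c l i m + c k i l * c l j m) = 0)"

text \<open>d e^m, given by d e^m (X,Y) = - e^m([X,Y]).\<close>
definition d_basis1 :: "(6 \<Rightarrow> 6 \<Rightarrow> 6 \<Rightarrow> real) \<Rightarrow> 6 \<Rightarrow> form" where
  "d_basis1 c m = (\<chi> K. if card K = 2 then - c (Min K) (Max K) m else 0)"

text \<open>d on monomials, extending d as a (graded) derivation; d vanishes on 0-forms.\<close>
definition d_mono :: "(6 \<Rightarrow> 6 \<Rightarrow> 6 \<Rightarrow> real) \<Rightarrow> 6 set \<Rightarrow> form" where
  "d_mono c I = (let L = sorted_list_of_set I in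
     \<Sum>a<length L. ((-1) ^ a) *\<^sub>R
        wedgel (map (\<lambda>i. eform {i}) (take a L) @ [d_basis1 c (L ! a)]
                @ map (\<lambda>i. eform {i}) (drop (Suc a) L)))"

definition CE_d :: "(6 \<Rightarrow> 6 \<Rightarrow> 6 \<Rightarrow> real) \<Rightarrow> form \<Rightarrow> form" where
  "CE_d c \<alpha> = (\<Sum>I\<in>UNIV. (\<alpha> $ I) *\<^sub>R d_mono c I)"

text \<open>Lambda^{p,q} = Lambda^p V1 tensor Lambda^q V2, as a subspace of the (p+q)-forms.\<close>
definition Lam :: "form set \<Rightarrow> form set \<Rightarrow> nat \<Rightarrow> nat \<Rightarrow> form set" where
  "Lam V1 V2 p q = span {wedgel (vs @ ws) | vs ws.
      length vs = p \<and> set vs \<subseteq> V1 \<and> length ws = q \<and> set ws \<subseteq> V2}"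

definition coherent_splitting :: "(6 \<Rightarrow> 6 \<Rightarrow> 6 \<Rightarrow> real) \<Rightarrow> form set \<Rightarrow> form set \<Rightarrow> bool" where
  "coherent_splitting c V1 V2 \<longleftrightarrow>
     subspace V1 \<and> subspace V2 \<and> V1 \<subseteq> forms_deg 1 \<and> V2 \<subseteq> forms_deg 1 \<and>
     V1 \<inter> V2 = {0} \<and> {x + y | x y. x \<in> V1 \<and> y \<in> V2} = forms_deg 1 \<and>
     dim V1 = 2 \<and>
     (\<forall>p q. CE_d c ` Lam V1 V2 p q \<subseteq>
        {x + y | x y. x \<in> Lam V1 V2 (Suc p) q \<and>
                      y \<in> (if q = 0 then {0} else Lam V1 V2 (p + 2) (q - 1))})"

definition Filt :: "form set \<Rightarrow> form set \<Rightarrow> nat \<Rightarrow> nat \<Rightarrow> form set" where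
  "Filt V1 V2 k p = span (\<Union>p'\<in>{p..k}. Lam V1 V2 p' (k - p'))"

definition closed_forms :: "(6 \<Rightarrow> 6 \<Rightarrow> 6 \<Rightarrow> real) \<Rightarrow> nat \<Rightarrow> form set" where
  "closed_forms c k = {\<alpha> \<in> forms_deg k. CE_d c \<alpha> = 0}"

definition exact_forms :: "(6 \<Rightarrow> 6 \<Rightarrow> 6 \<Rightarrow> real) \<Rightarrow> nat \<Rightarrow> form set" where
  "exact_forms c k = (if k = 0 then {0} else CE_d c ` forms_deg (k - 1))"

text \<open>Preimage in Z^k of H^k_p: (Z^k \<inter> F^k_p) + B^k, so that H^k_p = this / B^k.\<close>
definition Hpre :: "(6 \<Rightarrow> 6 \<Rightarrow> 6 \<Rightarrow> real) \<Rightarrow> form set \<Rightarrow> form set \<Rightarrow> nat \<Rightarrow> nat \<Rightarrow> form set" where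
  "Hpre c V1 V2 k p = {z + b | z b. z \<in> closed_forms c k \<inter> Filt V1 V2 k p \<and> b \<in> exact_forms c k}"

text \<open>h^{p,q} = dim H^{p+q}_p - dim H^{p+q}_{p+1}
  = dim(Hpre_p / B) - dim(Hpre_{p+1} / B) = dim Hpre_p - dim Hpre_{p+1}.\<close>
definition hdim :: "(6 \<Rightarrow> 6 \<Rightarrow> 6 \<Rightarrow> real) \<Rightarrow> form set \<Rightarrow> form set \<Rightarrow> nat \<Rightarrow> nat \<Rightarrow> nat" where
  "hdim c V1 V2 p q = dim (Hpre c V1 V2 (p + q) p) - dim (Hpre c V1 V2 (p + q) (Suc p))"

text \<open>SU(3)-structure: psi+ is the real part of
  (eta1 + i eta2) wedge (eta3 + i eta4) wedge (eta5 + i eta6).\<close>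
definition SU3_structure :: "form \<Rightarrow> form \<Rightarrow> bool" where
  "SU3_structure \<omega> \<psi> \<longleftrightarrow> (\<exists>\<eta> :: nat \<Rightarrow> form.
     inj_on \<eta> {1..6} \<and> \<eta> ` {1..6} \<subseteq> forms_deg 1 \<and>
     independent (\<eta> ` {1..6}) \<and> span (\<eta> ` {1..6}) = forms_deg 1 \<and>
     \<omega> = wedge (\<eta> 1) (\<eta> 2) + wedge (\<eta> 3) (\<eta> 4) + wedge (\<eta> 5) (\<eta> 6) \<and>
     \<psi> = wedgel [\<eta> 1, \<eta> 3, \<eta> 5] - wedgel [\<eta> 1, \<eta> 4, \<eta> 6]
         - wedgel [\<eta> 2, \<eta> 3, \<eta> 6] - wedgel [\<eta> 2, \<eta> 4, \<eta> 5])"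

definition half_flat :: "(6 \<Rightarrow> 6 \<Rightarrow> 6 \<Rightarrow> real) \<Rightarrow> form \<Rightarrow> form \<Rightarrow> bool" where
  "half_flat c \<omega> \<psi> \<longleftrightarrow> SU3_structure \<omega> \<psi> \<and>
     wedge (CE_d c \<omega>) \<omega> = 0 \<and> CE_d c \<psi> = 0"

end

theory Submission
  imports Defs
begin


lemma eform_nth: "eform I $ J = (if J = I then 1 else 0)"
  by (simp add: eform_def axis_def)

lemma wedge_nth: "wedge a b $ K = (\<Sum>I\<in>Pow K. (-1) ^ inv_count I (K - I) * (a $ I) * (b $ (K - I)))"
  by (simp add: wedge_def)

lemma wedge_eform:
  "wedge (eform I) (eform J) = (if I \<inter> J = {} then (-1) ^ inv_count I J else 0) *\<^sub>R eform (I \<union> J)"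
proof (rule vec_eq_iff[THEN iffD2, rule_format])
  fix K
  have "wedge (eform I) (eform J) $ K = (\<Sum>I'\<in>Pow K. (if I' = I then (-1) ^ inv_count I (K - I) * (eform J $ (K - I)) else 0))"
    unfolding wedge_nth by (rule sum.cong) (auto simp: eform_nth)
  also have "\<dots> = (if I \<subseteq> K then (-1) ^ inv_count I (K - I) * (eform J $ (K - I)) else 0)"
    by (simp add: sum.delta)
  also have "\<dots> = ((if I \<inter> J = {} then (-1) ^ inv_count I J else 0) *\<^sub>R eform (I \<union> J)) $ K"
    by (auto simp: eform_nth)
  finally show "wedge (eform I) (eform J) $ K = ((if I \<inter> J = {} then (-1) ^ inv_count I J else 0) *\<^sub>R eform (I \<union> J)) $ K" .
qed

lemma linear_wedge_left: "linear (\<lambda>x. wedge x y)"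
  by (rule linearI) (simp_all add: vec_eq_iff wedge_nth sum.distrib sum_distrib_left algebra_simps)

lemma linear_wedge_right: "linear (wedge x)"
  by (rule linearI) (simp_all add: vec_eq_iff wedge_nth sum.distrib sum_distrib_left algebra_simps)

lemma form_expansion: "x = (\<Sum>I\<in>UNIV. x $ I *\<^sub>R eform I)"
  using basis_expansion[of x] by (simp add: eform_def scalar_mult_eq_scaleR)

lemma linear_eq_eform:
  assumes "linear f" "linear g" "\<And>I. f (eform I) = g (eform I)"
  shows "f x = g x"
proof -
  have "f x = f (\<Sum>I\<in>UNIV. x $ I *\<^sub>R eform I)" using form_expansion[of x] by simp
  also have "\<dots> = (\<Sum>I\<in>UNIV. x $ I *\<^sub>R f (eform I))" using assms(1) by (simp add: linear_sum linear_cmul)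
  also have "\<dots> = (\<Sum>I\<in>UNIV. x $ I *\<^sub>R g (eform I))" using assms(3) by simp
  also have "\<dots> = g (\<Sum>I\<in>UNIV. x $ I *\<^sub>R eform I)" using assms(2) by (simp add: linear_sum linear_cmul)
  finally show ?thesis using form_expansion[of x] by simp
qed


lemma inv_count_union_left:
  assumes "I \<inter> J = {}" shows "inv_count (I \<union> J) K = inv_count I K + inv_count J K"
proof -
  have "{(i, j). i \<in> I \<union> J \<and> j \<in> K \<and> j < i} = {(i, j). i \<in> I \<and> j \<in> K \<and> j < i} \<union> {(i, j). i \<in> J \<and> j \<in> K \<and> j < i}"
    by auto
  moreover have "{(i, j). i \<in> I \<and> j \<in> K \<and> j < i} \<inter> {(i, j). i \<in> J \<and> j \<in> K \<and> j < i} = {}"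
    using assms by auto
  ultimately show ?thesis unfolding inv_count_def by (simp add: card_Un_disjoint)
qed

lemma inv_count_union_right:
  assumes "J \<inter> K = {}" shows "inv_count I (J \<union> K) = inv_count I J + inv_count I K"
proof -
  have "{(i, j). i \<in> I \<and> j \<in> J \<union> K \<and> j < i} = {(i, j). i \<in> I \<and> j \<in> J \<and> j < i} \<union> {(i, j). i \<in> I \<and> j \<in> K \<and> j < i}"
    by auto
  moreover have "{(i, j). i \<in> I \<and> j \<in> J \<and> j < i} \<inter> {(i, j). i \<in> I \<and> j \<in> K \<and> j < i} = {}"
    using assms by auto
  ultimately show ?thesis unfolding inv_count_def by (simp add: card_Un_disjoint)
qed


lemma inv_count_swap:
  assumes "I \<inter> J = {}" shows "inv_count I J + inv_count J I = card I * card J"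
proof -
  have 1: "card {(i, j). i \<in> J \<and> j \<in> I \<and> j < i} = card {(i, j). i \<in> I \<and> j \<in> J \<and> i < j}"
    by (rule bij_betw_same_card[of "\<lambda>(a,b). (b,a)"]) (auto simp: bij_betw_def inj_on_def image_def)
  have 2: "{(i, j). i \<in> I \<and> j \<in> J \<and> j < i} \<union> {(i, j). i \<in> I \<and> j \<in> J \<and> i < j} = I \<times> J"
    using assms by (auto simp: not_less_iff_gr_or_eq)
  have 3: "{(i, j). i \<in> I \<and> j \<in> J \<and> j < i} \<inter> {(i, j). i \<in> I \<and> j \<in> J \<and> i < j} = {}"
    by auto
  have "card (I \<times> J) = card {(i, j). i \<in> I \<and> j \<in> J \<and> j < i} + card {(i, j). i \<in> I \<and> j \<in> J \<and> i < j}"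
    unfolding 2[symmetric] by (rule card_Un_disjoint[OF _ _ 3]) auto
  then show ?thesis unfolding inv_count_def 1 by (simp add: card_cartesian_product)
qed


lemma wedge_zero[simp]: "wedge 0 x = 0" "wedge x 0 = 0"
  using linear_0[OF linear_wedge_left] linear_0[OF linear_wedge_right] by auto

lemma wedge_add: "wedge (x + y) z = wedge x z + wedge y z" "wedge z (x + y) = wedge z x + wedge z y"
  using linear_add[OF linear_wedge_left] linear_add[OF linear_wedge_right] by auto

lemma wedge_diff: "wedge (x - y) z = wedge x z - wedge y z" "wedge z (x - y) = wedge z x - wedge z y"
  using linear_diff[OF linear_wedge_left] linear_diff[OF linear_wedge_right] by auto

lemma wedge_minus[simp]: "wedge (- x) z = - wedge x z" "wedge z (- x) = - wedge z x"
  using linear_neg[OF linear_wedge_left] linear_neg[OF linear_wedge_right] by auto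

lemma wedge_scaleR[simp]: "wedge (r *\<^sub>R x) z = r *\<^sub>R wedge x z" "wedge z (r *\<^sub>R x) = r *\<^sub>R wedge z x"
  using linear_cmul[OF linear_wedge_left] linear_cmul[OF linear_wedge_right] by auto

lemma wedge_sum: "wedge (sum f A) z = (\<Sum>a\<in>A. wedge (f a) z)" "wedge z (sum f A) = (\<Sum>a\<in>A. wedge z (f a))"
  using linear_sum[OF linear_wedge_left] linear_sum[OF linear_wedge_right] by auto


lemma inv_count_empty[simp]: "inv_count {} J = 0" "inv_count I {} = 0"
  by (simp_all add: inv_count_def)

lemma one_form_eq: "one_form = eform {}" by (simp add: one_form_def)

lemma wedge_assoc_eform:
  "wedge (wedge (eform I) (eform J)) (eform K) = wedge (eform I) (wedge (eform J) (eform K))"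
proof (cases "I \<inter> J = {} \<and> I \<inter> K = {} \<and> J \<inter> K = {}")
  case True
  then have "inv_count I J + inv_count (I \<union> J) K = inv_count J K + inv_count I (J \<union> K)"
    by (simp add: inv_count_union_left inv_count_union_right)
  then have e: "(-1::real) ^ inv_count I J * (-1) ^ inv_count (I \<union> J) K = (-1) ^ inv_count J K * (-1) ^ inv_count I (J \<union> K)"
    by (metis power_add)
  have d1: "(I \<union> J) \<inter> K = {}" "I \<inter> (J \<union> K) = {}" using True by auto
  show ?thesis
    using True d1 e by (simp add: wedge_eform Un_assoc)
next
  case False
  then consider "I \<inter> J \<noteq> {}" | "I \<inter> J = {}" "J \<inter> K \<noteq> {}" | "I \<inter> J = {}" "J \<inter> K = {}" "I \<inter> K \<noteq> {}" by blast
  then show ?thesis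
  proof cases
    case 1
    then have "I \<inter> (J \<union> K) \<noteq> {}" by auto
    with 1 show ?thesis by (simp add: wedge_eform)
  next
    case 2
    then have "(I \<union> J) \<inter> K \<noteq> {}" by auto
    with 2 show ?thesis by (simp add: wedge_eform)
  next
    case 3
    then have "(I \<union> J) \<inter> K \<noteq> {}" "I \<inter> (J \<union> K) \<noteq> {}" by auto
    with 3 show ?thesis by (simp add: wedge_eform)
  qed
qed


lemma linear_comp2: "linear f \<Longrightarrow> linear g \<Longrightarrow> linear (\<lambda>x. f (g x))"
  using linear_compose[of g f] by (simp add: o_def)

lemma wedge_assoc: "wedge (wedge x y) z = wedge x (wedge y z)"
proof -
  have A: "wedge (wedge (eform I) (eform J)) z = wedge (eform I) (wedge (eform J) z)" for I J
    by (rule linear_eq_eform[where f="\<lambda>z. wedge (wedge (eform I) (eform J)) z" and g="\<lambda>z. wedge (eform I) (wedge (eform J) z)"])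
      (auto intro: linear_comp2 linear_wedge_right wedge_assoc_eform)
  have B: "wedge (wedge (eform I) y) z = wedge (eform I) (wedge y z)" for I
    by (rule linear_eq_eform[where f="\<lambda>y. wedge (wedge (eform I) y) z" and g="\<lambda>y. wedge (eform I) (wedge y z)"])
      (auto intro: linear_comp2 linear_wedge_right linear_wedge_left A)
  show ?thesis
    by (rule linear_eq_eform[where f="\<lambda>x. wedge (wedge x y) z" and g="\<lambda>x. wedge x (wedge y z)"])
      (auto intro: linear_comp2 linear_wedge_right linear_wedge_left B)
qed

lemma wedge_one_left[simp]: "wedge one_form x = x"
proof -
  have "wedge one_form (eform J) = id (eform J)" for J by (simp add: one_form_eq wedge_eform)
  then show ?thesis
    using linear_eq_eform[of "wedge one_form" id x] linear_wedge_right by (simp add: linear_id)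
qed

lemma wedge_one_right[simp]: "wedge x one_form = x"
proof -
  have "wedge (eform J) one_form = id (eform J)" for J by (simp add: one_form_eq wedge_eform)
  then show ?thesis
    using linear_eq_eform[of "\<lambda>x. wedge x one_form" id x] linear_wedge_left by (simp add: linear_id)
qed

lemma wedge_eform_comm:
  "wedge (eform I) (eform J) = (-1) ^ (card I * card J) *\<^sub>R wedge (eform J) (eform I)"
proof (cases "I \<inter> J = {}")
  case True
  then have "(-1::real) ^ inv_count I J = (-1) ^ (card I * card J) * (-1) ^ inv_count J I"
    using inv_count_swap[OF True]
  proof -
    have "inv_count I J + inv_count J I = card I * card J" using inv_count_swap[OF True] .
    then have "(-1::real) ^ (card I * card J) * (-1) ^ inv_count J I = (-1) ^ inv_count I J * ((-1) ^ inv_count J I * (-1) ^ inv_count J I)"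
      by (metis power_add mult.commute mult.assoc)
    also have "(-1::real) ^ inv_count J I * (-1) ^ inv_count J I = 1"
      by (metis power_add power_minus1_even mult_2)
    finally show ?thesis by simp
  qed
  with True show ?thesis by (simp add: wedge_eform Int_commute Un_commute)
qed (simp add: wedge_eform Int_commute)

lemma forms_deg_iff: "x \<in> forms_deg k \<longleftrightarrow> (\<forall>I. card I \<noteq> k \<longrightarrow> x $ I = 0)"
  by (simp add: forms_deg_def)

lemma form_expansion_deg:
  assumes "x \<in> forms_deg k"
  shows "x = (\<Sum>I\<in>{I. card I = k}. x $ I *\<^sub>R eform I)"
proof -
  have "x = (\<Sum>I\<in>UNIV. x $ I *\<^sub>R eform I)" by (rule form_expansion)
  also have "\<dots> = (\<Sum>I\<in>{I. card I = k}. x $ I *\<^sub>R eform I)"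
    using assms by (intro sum.mono_neutral_right) (auto simp: forms_deg_iff)
  finally show ?thesis .
qed

lemma linear_eq_eform_deg:
  assumes "linear f" "linear g" "\<And>I. card I = k \<Longrightarrow> f (eform I) = g (eform I)" "x \<in> forms_deg k"
  shows "f x = g x"
proof -
  have "f x = f (\<Sum>I\<in>{I. card I = k}. x $ I *\<^sub>R eform I)" using form_expansion_deg[OF assms(4)] by simp
  also have "\<dots> = (\<Sum>I\<in>{I. card I = k}. x $ I *\<^sub>R f (eform I))" using assms(1) by (simp add: linear_sum linear_cmul)
  also have "\<dots> = (\<Sum>I\<in>{I. card I = k}. x $ I *\<^sub>R g (eform I))" using assms(3) by simp
  also have "\<dots> = g (\<Sum>I\<in>{I. card I = k}. x $ I *\<^sub>R eform I)" using assms(2) by (simp add: linear_sum linear_cmul)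
  finally show ?thesis using form_expansion_deg[OF assms(4)] by simp
qed

lemma eform_deg: "eform I \<in> forms_deg (card I)"
  by (simp add: forms_deg_iff eform_nth)

lemma wedge_deg:
  assumes "x \<in> forms_deg k" "y \<in> forms_deg l"
  shows "wedge x y \<in> forms_deg (k + l)"
  unfolding forms_deg_iff
proof (intro allI impI)
  fix K :: "6 set" assume K: "card K \<noteq> k + l"
  have "(-1) ^ inv_count I (K - I) * (x $ I) * (y $ (K - I)) = 0" if "I \<in> Pow K" for I
  proof -
    have "card K = card I + card (K - I)" using that
      by (metis PowD card_Diff_subset card_mono finite le_add_diff_inverse)
    then have "card I \<noteq> k \<or> card (K - I) \<noteq> l" using K by auto
    then show ?thesis using assms by (auto simp: forms_deg_iff)
  qed
  then show "wedge x y $ K = 0" unfolding wedge_nth by (intro sum.neutral) blast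
qed

lemma wedge_comm:
  assumes "x \<in> forms_deg k" "y \<in> forms_deg l"
  shows "wedge x y = (-1) ^ (k * l) *\<^sub>R wedge y x"
proof -
  have A: "wedge (eform I) y = (-1) ^ (k * l) *\<^sub>R wedge y (eform I)" if "card I = k" for I
    by (rule linear_eq_eform_deg[where f="wedge (eform I)" and g="\<lambda>y. (-1) ^ (k * l) *\<^sub>R wedge y (eform I)" and k=l])
      (auto intro!: linear_wedge_right linear_compose_scale_right linear_wedge_left
        simp: wedge_eform_comm[of I] that assms)
  show ?thesis
    apply (rule linear_eq_eform_deg[where f="\<lambda>x. wedge x y" and g="\<lambda>x. (-1) ^ (k * l) *\<^sub>R wedge y x" and k=k])
    using A assms by (auto intro!: linear_wedge_right linear_compose_scale_right linear_wedge_left)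
qed



lemma wedgel_Nil[simp]: "wedgel [] = one_form" and wedgel_Cons[simp]: "wedgel (x # xs) = wedge x (wedgel xs)"
  by (simp_all add: wedgel_def)

lemma wedgel_append: "wedgel (xs @ ys) = wedge (wedgel xs) (wedgel ys)"
  by (induction xs) (simp_all add: wedge_assoc)

lemma one_form_deg: "one_form \<in> forms_deg 0"
  using eform_deg[of "{}"] by (simp add: one_form_eq)

lemma wedgel_deg: "set xs \<subseteq> forms_deg 1 \<Longrightarrow> wedgel xs \<in> forms_deg (length xs)"
  by (induction xs) (auto simp: one_form_deg dest: wedge_deg)

lemma wedge_anti1: "x \<in> forms_deg 1 \<Longrightarrow> y \<in> forms_deg 1 \<Longrightarrow> wedge x y = - wedge y x"
  using wedge_comm[of x 1 y 1] by simp

lemma wedge_self1: "x \<in> forms_deg 1 \<Longrightarrow> wedge x x = 0"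
proof -
  assume "x \<in> forms_deg 1"
  then have "wedge x x = - wedge x x" using wedge_anti1[of x x] by blast
  then show ?thesis by (simp add: vec_eq_iff)
qed

lemma wedge_self1': "x \<in> forms_deg 1 \<Longrightarrow> wedge x (wedge x z) = 0"
  using wedge_self1[of x] by (simp flip: wedge_assoc)

lemma wedge_swap1: "x \<in> forms_deg 1 \<Longrightarrow> y \<in> forms_deg 1 \<Longrightarrow> wedge x (wedge y z) = - wedge y (wedge x z)"
  using wedge_anti1[of x y] by (simp flip: wedge_assoc)

lemma eform_single_deg: "eform {i} \<in> forms_deg 1"
  using eform_deg[of "{i}"] by simp

lemma wedge_eform_insert:
  assumes "\<forall>j\<in>J. i < j"
  shows "wedge (eform {i}) (eform J) = eform (insert i J)"
proof -
  have "{i} \<inter> J = {}" using assms by auto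
  moreover have "inv_count {i} J = 0" using assms unfolding inv_count_def by auto
  ultimately show ?thesis by (simp add: wedge_eform)
qed

lemma wedgel_eforms:
  "sorted L \<Longrightarrow> distinct L \<Longrightarrow> wedgel (map (\<lambda>i. eform {i}) L) = eform (set L)"
proof (induction L)
  case Nil then show ?case by (simp add: one_form_eq)
next
  case (Cons i L)
  then have "\<forall>j\<in>set L. i < j" by (auto simp: order.strict_iff_order)
  with Cons show ?case by (simp add: wedge_eform_insert)
qed

definition sgnf :: "form \<Rightarrow> form" where
  "sgnf x = (\<chi> I. (-1) ^ card I * x $ I)"

lemma linear_sgnf: "linear sgnf"
  by (rule linearI) (simp_all add: sgnf_def vec_eq_iff algebra_simps)

lemma sgnf_eform: "sgnf (eform I) = (-1) ^ card I *\<^sub>R eform I"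
  by (simp add: sgnf_def vec_eq_iff eform_nth)

lemma sgnf_deg: "x \<in> forms_deg k \<Longrightarrow> sgnf x = (-1) ^ k *\<^sub>R x"
  by (auto simp: sgnf_def vec_eq_iff forms_deg_iff)

lemma linear_CE_d: "linear (CE_d c)"
  by (rule linearI) (simp_all add: CE_d_def sum.distrib scaleR_add_left scaleR_sum_right)

lemma CE_d_eform: "CE_d c (eform I) = d_mono c I"
proof -
  have "CE_d c (eform I) = (\<Sum>J\<in>UNIV. (if J = I then d_mono c I else 0))"
    unfolding CE_d_def by (rule sum.cong) (auto simp: eform_nth)
  then show ?thesis by simp
qed

lemma d_mono_empty: "d_mono c {} = 0"
  by (simp add: d_mono_def)

lemma d_basis1_deg: "d_basis1 c i \<in> forms_deg 2"
  by (simp add: forms_deg_iff d_basis1_def)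

lemma d_mono_insert:
  assumes "\<forall>j\<in>J. i < j"
  shows "d_mono c (insert i J) = wedge (d_basis1 c i) (eform J) - wedge (eform {i}) (d_mono c J)"
proof -
  define L where "L = sorted_list_of_set J"
  have iJ: "i \<notin> J" using assms by auto
  have SL: "sorted_list_of_set (insert i J) = i # L"
    unfolding L_def using assms iJ
    by (simp add: sorted_list_of_set_insert insort_is_Cons order.strict_implies_order)
  have EL: "wedgel (map (\<lambda>i. eform {i}) L) = eform J"
    unfolding L_def by (simp add: wedgel_eforms)
  let ?T = "\<lambda>L a. ((-1) ^ a) *\<^sub>R wedgel (map (\<lambda>i. eform {i}) (take a L) @ [d_basis1 c (L ! a)]
                @ map (\<lambda>i. eform {i}) (drop (Suc a) L))"
  have DJ: "d_mono c J = (\<Sum>a<length L. ?T L a)" unfolding d_mono_def L_def Let_def by simp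
  have "d_mono c (insert i J) = (\<Sum>a<Suc (length L). ?T (i # L) a)"
    unfolding d_mono_def SL Let_def by simp
  also have "\<dots> = ?T (i # L) 0 + (\<Sum>a<length L. ?T (i # L) (Suc a))"
    by (rule sum.lessThan_Suc_shift)
  also have "?T (i # L) 0 = wedge (d_basis1 c i) (eform J)"
    using EL by simp
  also have "(\<Sum>a<length L. ?T (i # L) (Suc a)) = (\<Sum>a<length L. - wedge (eform {i}) (?T L a))"
    by (rule sum.cong) (simp_all add: wedgel_append)
  also have "\<dots> = - wedge (eform {i}) (d_mono c J)"
    unfolding DJ by (simp add: wedge_sum sum_negf)
  finally show ?thesis by simp
qed

lemma d_mono_single: "d_mono c {i} = d_basis1 c i"
  using d_mono_insert[of "{}" i c] by (simp add: d_mono_empty one_form_eq[symmetric])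



lemma LB_insert:
  assumes "\<forall>j\<in>J. i < j"
  shows "CE_d c (wedge (eform {i}) (eform J)) = wedge (d_basis1 c i) (eform J) - wedge (eform {i}) (CE_d c (eform J))"
  using assms by (simp add: wedge_eform_insert CE_d_eform d_mono_insert)

lemma comm12: "x \<in> forms_deg 1 \<Longrightarrow> y \<in> forms_deg 2 \<Longrightarrow> wedge x (wedge y z) = wedge y (wedge x z)"
  using wedge_comm[of x 1 y 2] by (simp flip: wedge_assoc)

lemma min_split:
  fixes J :: "6 set"
  assumes "J \<noteq> {}"
  shows "J = insert (Min J) (J - {Min J})" "\<forall>x\<in>J - {Min J}. Min J < x" "card (J - {Min J}) < card J"
    "Min J \<notin> J - {Min J}"
proof -
  show "J = insert (Min J) (J - {Min J})" using Min_in[OF finite assms] by auto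
  show "\<forall>x\<in>J - {Min J}. Min J < x" using assms by (auto simp: order.strict_iff_order)
  show "card (J - {Min J}) < card J" using assms by (intro card_Diff1_less) auto
  show "Min J \<notin> J - {Min J}" by simp
qed

lemma CE_d_one: "CE_d c one_form = 0"
  by (simp add: one_form_eq CE_d_eform d_mono_empty)

lemma LB1: "CE_d c (wedge (eform {i}) y) = wedge (d_basis1 c i) y - wedge (eform {i}) (CE_d c y)"
proof -
  let ?D = "CE_d c" and ?e = "\<lambda>i. eform {i}" and ?db = "d_basis1 c"
  have LD: "linear ?D" by (rule linear_CE_d)
  have P: "?D (wedge (?e i) (eform J)) = wedge (?db i) (eform J) - wedge (?e i) (?D (eform J))" for J
  proof (induction "card J" arbitrary: J rule: less_induct)
    case less
    show ?case
    proof (cases "J = {}")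
      case True
      then show ?thesis by (simp add: one_form_eq[symmetric] CE_d_eform d_mono_single CE_d_one)
    next
      case False
      define j where "j = Min J"
      define J' where "J' = J - {j}"
      have J: "J = insert j J'" "\<forall>x\<in>J'. j < x" "card J' < card J" "j \<notin> J'"
        using min_split[OF False] unfolding j_def J'_def by auto
      have eJ: "eform J = wedge (?e j) (eform J')" using J by (simp add: wedge_eform_insert)
      have DJ: "?D (eform J) = wedge (?db j) (eform J') - wedge (?e j) (?D (eform J'))"
        unfolding eJ by (rule LB_insert[OF J(2)])
      consider "i < j" | "i = j" | "j < i" by fastforce
      then show ?thesis
      proof cases
        case 1
        then have "\<forall>x\<in>J. i < x" using J by auto
        then show ?thesis by (rule LB_insert)
      next
        case 2
        have "wedge (?e i) (eform J) = 0" unfolding eJ 2 by (rule wedge_self1'[OF eform_single_deg])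
        moreover have "wedge (?db i) (eform J) - wedge (?e i) (?D (eform J)) = 0"
          unfolding DJ 2 eJ
          by (simp add: LB_insert[OF J(2)] wedge_diff wedge_self1'[OF eform_single_deg] comm12[OF eform_single_deg d_basis1_deg])
        ultimately show ?thesis by (simp add: linear_0[OF LD])
      next
        case 3
        define \<gamma> where "\<gamma> = wedge (?e i) (eform J')"
        have g: "\<gamma> = (if {i} \<inter> J' = {} then (-1) ^ inv_count {i} J' else 0) *\<^sub>R eform (insert i J')"
          unfolding \<gamma>_def by (simp add: wedge_eform)
        have jK: "\<forall>x\<in>insert i J'. j < x" using J 3 by auto
        have Dg: "?D (wedge (?e j) \<gamma>) = wedge (?db j) \<gamma> - wedge (?e j) (?D \<gamma>)"
          unfolding g by (simp add: linear_cmul[OF LD] LB_insert[OF jK] algebra_simps)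
        have IH: "?D \<gamma> = wedge (?db i) (eform J') - wedge (?e i) (?D (eform J'))"
          unfolding \<gamma>_def using less(1)[OF J(3)] .
        have "wedge (?e i) (eform J) = - wedge (?e j) \<gamma>"
          unfolding eJ \<gamma>_def by (rule wedge_swap1[OF eform_single_deg eform_single_deg])
        then have "?D (wedge (?e i) (eform J)) = - (wedge (?db j) \<gamma> - wedge (?e j) (?D \<gamma>))"
          by (simp add: linear_neg[OF LD] Dg)
        also have "\<dots> = wedge (?db i) (eform J) - wedge (?e i) (?D (eform J))"
          unfolding IH DJ unfolding \<gamma>_def eJ
          by (simp add: wedge_diff comm12[OF eform_single_deg d_basis1_deg]
              wedge_swap1[OF eform_single_deg eform_single_deg, of j i] algebra_simps)
        finally show ?thesis .
      qed
    qed
  qed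
  have L1: "linear (\<lambda>y. ?D (wedge (?e i) y))" by (rule linear_comp2[OF LD linear_wedge_right])
  have L2: "linear (\<lambda>y. wedge (?db i) y - wedge (?e i) (?D y))"
    by (rule linear_compose_sub[OF linear_wedge_right linear_comp2[OF linear_wedge_right LD]])
  show ?thesis
    by (rule linear_eq_eform[OF L1 L2 P])
qed


lemma sgnf_one[simp]: "sgnf one_form = one_form"
  using sgnf_eform[of "{}"] by (simp add: one_form_eq)

lemma subspace_forms_deg: "subspace (forms_deg k)"
  unfolding subspace_def by (auto simp: forms_deg_iff)

lemma d_mono_deg: "d_mono c I \<in> forms_deg (Suc (card I))"
proof -
  define L where "L = sorted_list_of_set I"
  have lenL: "length L = card I" unfolding L_def by simp
  have "((-1) ^ a) *\<^sub>R wedgel (map (\<lambda>i. eform {i}) (take a L) @ [d_basis1 c (L ! a)]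
                @ map (\<lambda>i. eform {i}) (drop (Suc a) L)) \<in> forms_deg (Suc (card I))" if "a < length L" for a
  proof -
    have s1: "set (map (\<lambda>i. eform {i}) xs) \<subseteq> forms_deg 1" for xs using eform_single_deg by auto
    have 1: "wedgel (map (\<lambda>i. eform {i}) (take a L)) \<in> forms_deg a"
      using wedgel_deg[OF s1, of "take a L"] that by simp
    have 2: "wedgel (map (\<lambda>i. eform {i}) (drop (Suc a) L)) \<in> forms_deg (length L - Suc a)"
      using wedgel_deg[OF s1, of "drop (Suc a) L"] by simp
    have 3: "wedgel [d_basis1 c (L ! a)] \<in> forms_deg 2" by (simp add: d_basis1_deg)
    have "a + (2 + (length L - Suc a)) = Suc (card I)" using that lenL by simp
    moreover have "wedgel (map (\<lambda>i. eform {i}) (take a L) @ [d_basis1 c (L ! a)]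
                @ map (\<lambda>i. eform {i}) (drop (Suc a) L)) = wedge (wedgel (map (\<lambda>i. eform {i}) (take a L)))
          (wedge (wedgel [d_basis1 c (L ! a)]) (wedgel (map (\<lambda>i. eform {i}) (drop (Suc a) L))))"
      by (simp add: wedgel_append)
    ultimately show ?thesis
      using wedge_deg[OF 1 wedge_deg[OF 3 2]] subspace_scale[OF subspace_forms_deg]
      by (simp only:)
  qed
  then show ?thesis
    unfolding d_mono_def Let_def L_def[symmetric]
    by (intro subspace_sum[OF subspace_forms_deg]) auto
qed

lemma CE_d_deg: "x \<in> forms_deg k \<Longrightarrow> CE_d c x \<in> forms_deg (Suc k)"
  unfolding CE_d_def
proof (intro subspace_sum[OF subspace_forms_deg])
  fix I assume x: "x \<in> forms_deg k"
  show "x $ I *\<^sub>R d_mono c I \<in> forms_deg (Suc k)"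
  proof (cases "card I = k")
    case True
    then show ?thesis using d_mono_deg[of c I] subspace_scale[OF subspace_forms_deg] by auto
  next
    case False
    then have "x $ I = 0" using x by (simp add: forms_deg_iff)
    then show ?thesis using subspace_0[OF subspace_forms_deg] by simp
  qed
qed

lemma leibniz: "CE_d c (wedge x y) = wedge (CE_d c x) y + wedge (sgnf x) (CE_d c y)"
proof -
  let ?D = "CE_d c" and ?e = "\<lambda>i. eform {i}" and ?db = "d_basis1 c"
  have LD: "linear ?D" by (rule linear_CE_d)
  have P: "?D (wedge (eform I) y) = wedge (?D (eform I)) y + wedge (sgnf (eform I)) (?D y)" for I
  proof (induction "card I" arbitrary: I rule: less_induct)
    case less
    show ?case
    proof (cases "I = {}")
      case True
      then show ?thesis by (simp add: one_form_eq[symmetric] CE_d_one sgnf_eform)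
    next
      case False
      define i where "i = Min I"
      define I' where "I' = I - {i}"
      have I: "I = insert i I'" "\<forall>x\<in>I'. i < x" "card I' < card I" "i \<notin> I'"
        using min_split[OF False] unfolding i_def I'_def by auto
      have eI: "eform I = wedge (?e i) (eform I')" using I by (simp add: wedge_eform_insert)
      have cI: "card I = Suc (card I')" using I by simp
      have DI: "?D (eform I) = wedge (?db i) (eform I') - wedge (?e i) (?D (eform I'))"
        unfolding eI by (rule LB1)
      have "?D (wedge (eform I) y) = ?D (wedge (?e i) (wedge (eform I') y))"
        unfolding eI by (simp add: wedge_assoc)
      also have "\<dots> = wedge (?db i) (wedge (eform I') y) - wedge (?e i) (?D (wedge (eform I') y))"
        by (rule LB1)
      also have "\<dots> = wedge (?db i) (wedge (eform I') y) - wedge (?e i) (wedge (?D (eform I')) y + wedge (sgnf (eform I')) (?D y))"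
        using less(1)[OF I(3)] by simp
      also have "\<dots> = wedge (?D (eform I)) y + wedge (sgnf (eform I)) (?D y)"
        unfolding DI sgnf_eform cI unfolding eI
        by (simp add: wedge_diff wedge_add wedge_assoc algebra_simps)
      finally show ?thesis .
    qed
  qed
  have L1: "linear (\<lambda>x. ?D (wedge x y))" by (rule linear_comp2[OF LD linear_wedge_left])
  have L2: "linear (\<lambda>x. wedge (?D x) y + wedge (sgnf x) (?D y))"
    by (rule linear_compose_add[OF linear_comp2[OF linear_wedge_left LD] linear_comp2[OF linear_wedge_left linear_sgnf]])
  show ?thesis
    by (rule linear_eq_eform[OF L1 L2 P])
qed

lemma d_square2:
  assumes "\<omega> \<in> forms_deg 2"
  shows "CE_d c (wedge \<omega> \<omega>) = 2 *\<^sub>R wedge (CE_d c \<omega>) \<omega>"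
proof -
  have d3: "CE_d c \<omega> \<in> forms_deg 3"
    using CE_d_deg[OF assms] by (simp add: numeral_3_eq_3)
  have "wedge \<omega> (CE_d c \<omega>) = wedge (CE_d c \<omega>) \<omega>"
    using wedge_comm[OF assms d3] by simp
  then show ?thesis using assms by (simp add: leibniz sgnf_deg scaleR_2)
qed



lemma linear_span_into:
  assumes "linear f" "subspace T" "\<And>z. z \<in> S \<Longrightarrow> f z \<in> T" "z \<in> span S"
  shows "f z \<in> T"
proof -
  have "subspace {z. f z \<in> T}"
    using assms(1,2) unfolding subspace_def
    by (auto simp: linear_0 linear_add linear_cmul)
  then have "span S \<subseteq> {z. f z \<in> T}" using assms(3) by (intro span_minimal) auto
  then show ?thesis using assms(4) by auto
qed

definition Gen :: "form set \<Rightarrow> form set \<Rightarrow> nat \<Rightarrow> nat \<Rightarrow> form set" where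
  "Gen V1 V2 p q = {wedgel (vs @ ws) | vs ws. length vs = p \<and> set vs \<subseteq> V1 \<and> length ws = q \<and> set ws \<subseteq> V2}"

lemma Lam_Gen: "Lam V1 V2 p q = span (Gen V1 V2 p q)"
  by (simp add: Lam_def Gen_def)

lemma Lam_sub_Filt: "p \<in> {p0..k} \<Longrightarrow> Lam V1 V2 p (k - p) \<subseteq> Filt V1 V2 k p0"
  unfolding Filt_def by (intro subset_trans[OF _ span_superset]) auto

lemma Gen_sub_Filt: "p \<in> {p0..k} \<Longrightarrow> x \<in> Gen V1 V2 p (k - p) \<Longrightarrow> x \<in> Filt V1 V2 k p0"
  using Lam_sub_Filt[of p p0 k V1 V2] span_superset[of "Gen V1 V2 p (k - p)"] by (auto simp: Lam_Gen)

lemma subspace_Filt: "subspace (Filt V1 V2 k p)"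
  by (simp add: Filt_def)

lemma wedgel_comm1:
  assumes "w \<in> forms_deg 1" "set vs \<subseteq> forms_deg 1"
  shows "wedge w (wedgel vs) = (-1) ^ length vs *\<^sub>R wedge (wedgel vs) w"
  using wedge_comm[OF assms(1) wedgel_deg[OF assms(2)]] by simp

lemma wedgel_in_Filt0:
  assumes V: "V1 \<subseteq> forms_deg 1" "V2 \<subseteq> forms_deg 1" "{x + y | x y. x \<in> V1 \<and> y \<in> V2} = forms_deg 1"
  shows "set xs \<subseteq> forms_deg 1 \<Longrightarrow> wedgel xs \<in> Filt V1 V2 (length xs) 0"
proof (induction xs)
  case Nil
  have "wedgel ([] @ []) \<in> Gen V1 V2 0 (0 - 0)" unfolding Gen_def
    by (rule CollectI, rule exI[of _ "[]"], rule exI[of _ "[]"]) simp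
  then show ?case using Gen_sub_Filt[of 0 0 0] by simp
next
  case (Cons x xs)
  define n where "n = length xs"
  have "x \<in> {x + y | x y. x \<in> V1 \<and> y \<in> V2}" using Cons.prems V(3) by simp
  then obtain v w where vw: "x = v + w" "v \<in> V1" "w \<in> V2" by blast
  have IH: "wedgel xs \<in> Filt V1 V2 n 0" using Cons n_def by auto
  have "wedge v z \<in> Filt V1 V2 (Suc n) 0 \<and> wedge w z \<in> Filt V1 V2 (Suc n) 0" if z: "z \<in> Filt V1 V2 n 0" for z
  proof -
    have gen: "wedge v g \<in> Filt V1 V2 (Suc n) 0 \<and> wedge w g \<in> Filt V1 V2 (Suc n) 0"
      if G: "g \<in> Gen V1 V2 p (n - p)" and P: "p \<in> {0..n}" for g p
    proof -
      obtain vs ws where g: "g = wedgel (vs @ ws)" "length vs = p" "set vs \<subseteq> V1" "length ws = n - p" "set ws \<subseteq> V2"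
        using G unfolding Gen_def by blast
      have "wedge v g = wedgel ((v # vs) @ ws)" using g by simp
      then have "wedge v g \<in> Gen V1 V2 (Suc p) (Suc n - Suc p)" unfolding Gen_def using g vw P by fastforce
      then have 1: "wedge v g \<in> Filt V1 V2 (Suc n) 0" by (rule Gen_sub_Filt[rotated]) (use P in auto)
      have "wedge w g = wedge (wedge w (wedgel vs)) (wedgel ws)" using g by (simp add: wedgel_append wedge_assoc)
      also have "\<dots> = (-1) ^ p *\<^sub>R wedge (wedge (wedgel vs) w) (wedgel ws)"
        using wedgel_comm1[of w vs] g vw V by auto
      also have "\<dots> = (-1) ^ p *\<^sub>R wedgel (vs @ (w # ws))" by (simp add: wedgel_append wedge_assoc)
      finally have "wedge w g = (-1) ^ p *\<^sub>R wedgel (vs @ (w # ws))" .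
      moreover have "wedgel (vs @ (w # ws)) \<in> Gen V1 V2 p (Suc n - p)" unfolding Gen_def using g vw P by fastforce
      ultimately have 2: "wedge w g \<in> Filt V1 V2 (Suc n) 0"
        using Gen_sub_Filt[of p 0 "Suc n"] P subspace_scale[OF subspace_Filt] by auto
      show ?thesis using 1 2 by blast
    qed
    have lam: "wedge v l \<in> Filt V1 V2 (Suc n) 0 \<and> wedge w l \<in> Filt V1 V2 (Suc n) 0"
      if "l \<in> Lam V1 V2 p (n - p)" "p \<in> {0..n}" for l p
      using linear_span_into[OF linear_wedge_right subspace_Filt, of "Gen V1 V2 p (n - p)" v]
        linear_span_into[OF linear_wedge_right subspace_Filt, of "Gen V1 V2 p (n - p)" w]
        gen[OF _ that(2)] that(1) unfolding Lam_Gen by blast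
    have "wedge v z \<in> Filt V1 V2 (Suc n) 0"
      using linear_span_into[OF linear_wedge_right subspace_Filt, of "\<Union>p\<in>{0..n}. Lam V1 V2 p (n - p)" v] lam z
      unfolding Filt_def by blast
    moreover have "wedge w z \<in> Filt V1 V2 (Suc n) 0"
      using linear_span_into[OF linear_wedge_right subspace_Filt, of "\<Union>p\<in>{0..n}. Lam V1 V2 p (n - p)" w] lam z
      unfolding Filt_def by blast
    ultimately show ?thesis by blast
  qed
  then show ?case using IH vw(1) subspace_add[OF subspace_Filt] by (simp add: wedge_add n_def)
qed



lemma eform_wedgel: "eform I = wedgel (map (\<lambda>i. eform {i}) (sorted_list_of_set I))"
  by (simp add: wedgel_eforms)

lemma forms_in_Filt0:
  assumes V: "V1 \<subseteq> forms_deg 1" "V2 \<subseteq> forms_deg 1" "{x + y | x y. x \<in> V1 \<and> y \<in> V2} = forms_deg 1"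
    and x: "x \<in> forms_deg k"
  shows "x \<in> Filt V1 V2 k 0"
proof -
  have "eform I \<in> Filt V1 V2 k 0" if "card I = k" for I
  proof -
    have "set (map (\<lambda>i. eform {i}) (sorted_list_of_set I)) \<subseteq> forms_deg 1" using eform_single_deg by auto
    from wedgel_in_Filt0[OF V this] show ?thesis using that by (simp flip: eform_wedgel)
  qed
  then have "(\<Sum>I\<in>{I. card I = k}. x $ I *\<^sub>R eform I) \<in> Filt V1 V2 k 0"
    by (intro subspace_sum[OF subspace_Filt] subspace_scale[OF subspace_Filt]) auto
  then show ?thesis using form_expansion_deg[OF x] by simp
qed

lemma coh_V:
  assumes "coherent_splitting c V1 V2"
  shows "V1 \<subseteq> forms_deg 1" "V2 \<subseteq> forms_deg 1" "{x + y | x y. x \<in> V1 \<and> y \<in> V2} = forms_deg 1"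
    "subspace V1" "subspace V2" "dim V1 = 2"
  using assms unfolding coherent_splitting_def by auto

lemma d_Filt0:
  assumes coh: "coherent_splitting c V1 V2" and x: "x \<in> Filt V1 V2 k 0"
  shows "CE_d c x \<in> Filt V1 V2 (Suc k) 1"
proof -
  have dL: "CE_d c ` Lam V1 V2 p q \<subseteq>
        {x + y | x y. x \<in> Lam V1 V2 (Suc p) q \<and>
                      y \<in> (if q = 0 then {0} else Lam V1 V2 (p + 2) (q - 1))}" for p q
    using coh unfolding coherent_splitting_def by blast
  have "CE_d c l \<in> Filt V1 V2 (Suc k) 1" if l: "l \<in> (\<Union>p\<in>{0..k}. Lam V1 V2 p (k - p))" for l
  proof -
    obtain p where p: "p \<in> {0..k}" "l \<in> Lam V1 V2 p (k - p)" using l by blast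
    then obtain a b where ab: "CE_d c l = a + b" "a \<in> Lam V1 V2 (Suc p) (k - p)"
      "b \<in> (if k - p = 0 then {0} else Lam V1 V2 (p + 2) (k - p - 1))"
      using dL[of p "k - p"] by blast
    have "a \<in> Filt V1 V2 (Suc k) 1"
      using Lam_sub_Filt[of "Suc p" 1 "Suc k" V1 V2] p ab by auto
    moreover have "b \<in> Filt V1 V2 (Suc k) 1"
    proof (cases "k - p = 0")
      case True then show ?thesis using ab subspace_0[OF subspace_Filt] by simp
    next
      case False
      then have "Suc k - (p + 2) = k - p - 1" "p + 2 \<in> {1..Suc k}" using p by auto
      then show ?thesis using Lam_sub_Filt[of "p + 2" 1 "Suc k" V1 V2] ab False by auto
    qed
    ultimately show ?thesis using ab subspace_add[OF subspace_Filt] by simp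
  qed
  then show ?thesis
    using linear_span_into[OF linear_CE_d subspace_Filt, of "\<Union>p\<in>{0..k}. Lam V1 V2 p (k - p)"] x
    unfolding Filt_def by blast
qed

lemma exact_sub_Filt1:
  assumes coh: "coherent_splitting c V1 V2" and k: "k \<ge> 1"
  shows "exact_forms c k \<subseteq> Filt V1 V2 k 1"
proof
  fix b assume "b \<in> exact_forms c k"
  then obtain y where y: "y \<in> forms_deg (k - 1)" "b = CE_d c y" using k by (auto simp: exact_forms_def)
  have "y \<in> Filt V1 V2 (k - 1) 0" using forms_in_Filt0[OF coh_V(1-3)[OF coh] y(1)] .
  from d_Filt0[OF coh this] show "b \<in> Filt V1 V2 k 1" using y k by simp
qed

lemma subspace_closed: "subspace (closed_forms c k)"
  unfolding subspace_def closed_forms_def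
  using subspace_forms_deg[of k]
  by (auto simp: subspace_def linear_0[OF linear_CE_d] linear_add[OF linear_CE_d] linear_cmul[OF linear_CE_d])

lemma subspace_exact: "subspace (exact_forms c k)"
  unfolding exact_forms_def
  using linear_subspace_image[OF linear_CE_d subspace_forms_deg] by (auto simp: subspace_def)

lemma subspace_Hpre: "subspace (Hpre c V1 V2 k p)"
  unfolding Hpre_def
  by (rule subspace_sums[OF subspace_inter[OF subspace_closed subspace_Filt] subspace_exact])

lemma closed_sub_Filt1:
  assumes coh: "coherent_splitting c V1 V2" and h: "hdim c V1 V2 0 k = 0" and k: "k \<ge> 1"
    and z: "z \<in> closed_forms c k"
  shows "z \<in> Filt V1 V2 k 1"
proof -
  have F: "Filt V1 V2 k 1 \<subseteq> Filt V1 V2 k 0" unfolding Filt_def by (intro span_mono) auto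
  have sub: "Hpre c V1 V2 k 1 \<subseteq> Hpre c V1 V2 k 0" unfolding Hpre_def using F by blast
  have "dim (Hpre c V1 V2 k 0) \<le> dim (Hpre c V1 V2 k 1)" using h by (simp add: hdim_def)
  then have eq: "Hpre c V1 V2 k 1 = Hpre c V1 V2 k 0"
    by (rule subspace_dim_equal[OF subspace_Hpre subspace_Hpre sub])
  have z0: "z \<in> Filt V1 V2 k 0"
    using z forms_in_Filt0[OF coh_V(1-3)[OF coh]] by (auto simp: closed_forms_def)
  have "0 \<in> exact_forms c k"
    using subspace_0[OF subspace_exact] .
  then have "z \<in> Hpre c V1 V2 k 0" unfolding Hpre_def using z z0 by force
  then have "z \<in> Hpre c V1 V2 k 1" using eq by simp
  then obtain a b where ab: "z = a + b" "a \<in> Filt V1 V2 k 1" "b \<in> exact_forms c k"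
    unfolding Hpre_def by blast
  then show ?thesis using exact_sub_Filt1[OF coh k] subspace_add[OF subspace_Filt] by auto
qed



lemma subspace_zero: "subspace {0::form}"
  by (simp add: subspace_def)

lemma V1_basis:
  assumes coh: "coherent_splitting c V1 V2"
  obtains a b where "a \<in> V1" "b \<in> V1" "a \<noteq> b" "independent {a, b}" "V1 \<subseteq> span {a, b}"
proof -
  obtain B where B: "B \<subseteq> V1" "independent B" "V1 \<subseteq> span B" "card B = dim V1"
    using basis_exists[of V1] by metis
  then have "card B = 2" using coh_V(6)[OF coh] by simp
  then obtain a b where "B = {a, b}" "a \<noteq> b" by (auto simp: card_2_iff)
  then show ?thesis using that B by auto
qed

lemma kill_Filt1:
  assumes a: "a \<in> forms_deg 1" and b: "b \<in> forms_deg 1" and V1: "V1 \<subseteq> span {a, b}"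
    and z: "z \<in> Filt V1 V2 k 1"
  shows "wedge (wedge a b) z = 0"
proof -
  have ab0: "wedge (wedge a b) v = 0" if "v \<in> span {a, b}" for v
  proof -
    have "wedge (wedge a b) a = wedge a (wedge b a)" by (simp add: wedge_assoc)
    also have "\<dots> = - wedge (wedge a a) b" using wedge_anti1[OF b a] by (simp add: wedge_assoc)
    also have "\<dots> = 0" using wedge_self1[OF a] by simp
    finally have "wedge (wedge a b) a = 0" .
    moreover have "wedge (wedge a b) b = 0"
      using wedge_self1[OF b] by (simp add: wedge_assoc)
    ultimately show ?thesis
      using linear_span_into[OF linear_wedge_right subspace_zero, of "{a, b}" "wedge a b" v] that by auto
  qed
  have gen: "wedge (wedge a b) g = 0" if G: "g \<in> Gen V1 V2 p (k - p)" and P: "p \<in> {1..k}" for g p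
  proof -
    obtain vs ws where g: "g = wedgel (vs @ ws)" "length vs = p" "set vs \<subseteq> V1"
      using G unfolding Gen_def by blast
    then obtain v vs' where vs: "vs = v # vs'" using P by (cases vs) auto
    have "wedge (wedge a b) g = wedge (wedge (wedge a b) v) (wedgel (vs' @ ws))"
      using g vs by (simp add: wedge_assoc)
    also have "\<dots> = 0" using ab0[of v] g vs V1 by auto
    finally show ?thesis .
  qed
  have lam: "wedge (wedge a b) l \<in> {0}" if "l \<in> (\<Union>p\<in>{1..k}. Lam V1 V2 p (k - p))" for l
  proof -
    from that obtain p where p: "p \<in> {1..k}" "l \<in> Lam V1 V2 p (k - p)" by blast
    then have p2: "l \<in> span (Gen V1 V2 p (k - p))" by (simp add: Lam_Gen)
    show ?thesis
      using linear_span_into[OF linear_wedge_right subspace_zero, of "Gen V1 V2 p (k - p)" "wedge a b" l] gen p p2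
      by auto
  qed
  show ?thesis
    using linear_span_into[OF linear_wedge_right subspace_zero, of "\<Union>p\<in>{1..k}. Lam V1 V2 p (k - p)" "wedge a b" z] lam z
    unfolding Filt_def by blast
qed



lemma sorted_not_distinct:
  "sorted l \<Longrightarrow> \<not> distinct l \<Longrightarrow> \<exists>xs y ys. l = xs @ y # y # ys"
proof (induction l)
  case Nil then show ?case by simp
next
  case (Cons a l)
  show ?case
  proof (cases "a \<in> set l")
    case True
    then obtain b l' where l: "l = b # l'" by (cases l) auto
    have "a \<le> b" using Cons.prems l by simp
    moreover have "b \<le> a" using Cons.prems l True by auto
    ultimately have "a = b" by simp
    then show ?thesis using l by (intro exI[of _ "[]"]) auto
  next
    case False
    then have "\<not> distinct l" using Cons.prems by simp
    then obtain xs y ys where "l = xs @ y # y # ys" using Cons by auto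
    then show ?thesis by (intro exI[of _ "a # xs"]) auto
  qed
qed

locale etaloc =
  fixes \<eta> :: "nat \<Rightarrow> form"
  assumes eta1: "\<eta> ` {1..6} \<subseteq> forms_deg 1"
begin

definition E :: "nat list \<Rightarrow> form" where "E l = wedgel (map \<eta> l)"

lemma eta_deg: "m \<in> {1..6} \<Longrightarrow> \<eta> m \<in> forms_deg 1"
  using eta1 by auto

lemma E_Cons: "E (x # l) = wedge (\<eta> x) (E l)" by (simp add: E_def)

lemma E_insort:
  assumes "x \<in> {1..6}" "set t \<subseteq> {1..6}"
  shows "\<exists>s. wedge (\<eta> x) (E t) = s *\<^sub>R E (insort x t)"
  using assms(2)
proof (induction t)
  case Nil then show ?case by (intro exI[of _ 1]) (simp add: E_def)
next
  case (Cons y t)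
  show ?case
  proof (cases "x \<le> y")
    case True then show ?thesis by (intro exI[of _ 1]) (simp add: E_Cons)
  next
    case False
    obtain s where s: "wedge (\<eta> x) (E t) = s *\<^sub>R E (insort x t)" using Cons by auto
    have "wedge (\<eta> x) (E (y # t)) = - wedge (\<eta> y) (wedge (\<eta> x) (E t))"
      unfolding E_Cons using Cons.prems assms(1) by (intro wedge_swap1 eta_deg) auto
    also have "\<dots> = (- s) *\<^sub>R E (insort x (y # t))" using False s by (simp add: E_Cons)
    finally show ?thesis by blast
  qed
qed

lemma E_sort: "set l \<subseteq> {1..6} \<Longrightarrow> \<exists>s. E l = s *\<^sub>R E (sort l)"
proof (induction l)
  case Nil then show ?case by (intro exI[of _ 1]) simp
next
  case (Cons x l)
  then obtain s where s: "E l = s *\<^sub>R E (sort l)" by auto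
  obtain s' where s': "wedge (\<eta> x) (E (sort l)) = s' *\<^sub>R E (insort x (sort l))"
    using E_insort[of x "sort l"] Cons.prems by auto
  have "E (x # l) = (s * s') *\<^sub>R E (sort (x # l))" unfolding E_Cons s using s' by simp
  then show ?case by blast
qed

end

context etaloc begin

definition vol :: form where "vol = E [1, 2, 3, 4, 5, 6]"

lemma E6_vol:
  assumes "set l \<subseteq> {1..6}" "length l = 6"
  shows "E l \<in> span {vol}"
proof -
  obtain s where s: "E l = s *\<^sub>R E (sort l)" using E_sort[OF assms(1)] by blast
  have "E (sort l) \<in> span {vol}"
  proof (cases "distinct (sort l)")
    case True
    have "card (set (sort l)) = 6" using distinct_card[of l] True assms(2) by simp
    moreover have "set (sort l) \<subseteq> {1..6}" using assms(1) by simp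
    ultimately have "set (sort l) = {1..6}"
      by (intro card_subset_eq) simp_all
    moreover have "set [1..<7] = {1..6::nat}"
      by (simp add: atLeastLessThanSuc_atLeastAtMost[of 1 6, simplified])
    ultimately have "sort l = [1..<7]"
      by (intro sorted_distinct_set_unique sorted_sort True sorted_upt distinct_upt) simp
    moreover have "[1..<7] = [1, 2, 3, 4, 5, 6::nat]" by (simp add: upt_rec)
    ultimately show ?thesis by (simp add: vol_def span_base)
  next
    case False
    then obtain xs y ys where l: "sort l = xs @ y # y # ys" using sorted_not_distinct[OF sorted_sort False] by blast
    then have "y \<in> set (sort l)" by simp
    then have y: "y \<in> {1..6}" using assms(1) by auto
    have "E (sort l) = wedge (wedgel (map \<eta> xs)) (wedge (\<eta> y) (wedge (\<eta> y) (E ys)))"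
      unfolding l E_def by (simp add: wedgel_append)
    also have "\<dots> = 0" using wedge_self1'[OF eta_deg[OF y]] by simp
    finally show ?thesis by (simp add: span_zero)
  qed
  then show ?thesis using s by (simp add: span_mul)
qed

lemma wedgel_span_E:
  assumes sp: "forms_deg 1 \<subseteq> span (\<eta> ` {1..6})"
  shows "set ys \<subseteq> forms_deg 1 \<Longrightarrow> wedgel ys \<in> span {E l | l. set l \<subseteq> {1..6} \<and> length l = length ys}"
proof (induction ys)
  case Nil
  have "wedgel [] \<in> {E l | l. set l \<subseteq> {1..6} \<and> length l = 0}" by (auto simp: E_def intro!: exI[of _ "[]"])
  then show ?case by (simp add: span_base)
next
  case (Cons y ys)
  let ?G = "{E l | l. set l \<subseteq> {1..6} \<and> length l = length ys}"
  let ?G' = "{E l | l. set l \<subseteq> {1..6} \<and> length l = Suc (length ys)}"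
  have z: "wedgel ys \<in> span ?G" using Cons by auto
  have y: "y \<in> span (\<eta> ` {1..6})" using Cons.prems sp by auto
  have m: "wedge (\<eta> m) z \<in> span ?G'" if "m \<in> {1..6}" "z \<in> span ?G" for m z
  proof -
    have "wedge (\<eta> m) g \<in> span ?G'" if "g \<in> ?G" for g
    proof -
      obtain l where l: "g = E l" "set l \<subseteq> {1..6}" "length l = length ys" using \<open>g \<in> ?G\<close> by blast
      have "wedge (\<eta> m) g = E (m # l)" using l by (simp add: E_Cons)
      moreover have "E (m # l) \<in> ?G'" using l \<open>m \<in> {1..6}\<close> by fastforce
      ultimately show ?thesis by (simp add: span_base)
    qed
    then show ?thesis using linear_span_into[OF linear_wedge_right subspace_span, of ?G "\<eta> m" ?G' z] that by blast
  qed
  have "wedge y (wedgel ys) \<in> span ?G'"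
    using linear_span_into[OF linear_wedge_left subspace_span, of "\<eta> ` {1..6}" "wedgel ys" ?G' y] m z y by blast
  then show ?case by simp
qed

lemma vol_nonzero:
  assumes sp: "forms_deg 1 \<subseteq> span (\<eta> ` {1..6})"
  shows "vol \<noteq> 0"
proof
  assume v0: "vol = 0"
  let ?L = "map (\<lambda>i. eform {i}) (sorted_list_of_set (UNIV :: 6 set))"
  have L1: "set ?L \<subseteq> forms_deg 1" using eform_single_deg by auto
  have L2: "length ?L = 6" by simp
  have "wedgel ?L \<in> span {E l | l. set l \<subseteq> {1..6} \<and> length l = length ?L}"
    by (rule wedgel_span_E[OF sp L1])
  then have "wedgel ?L \<in> span {E l | l. set l \<subseteq> {1..6} \<and> length l = 6}"
    unfolding L2 .
  moreover have "span {E l | l. set l \<subseteq> {1..6} \<and> length l = 6} \<subseteq> span {vol}"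
    using E6_vol by (intro span_minimal) auto
  ultimately have "wedgel ?L \<in> span {vol}" by blast
  then have "eform UNIV \<in> span {vol}" by (simp flip: eform_wedgel)
  then have "eform UNIV = 0" using v0 by simp
  moreover have "eform UNIV $ UNIV = 1" by (simp add: eform_nth)
  ultimately show False by simp
qed

end

context etaloc begin


lemma swap_eta: "x \<in> {1..6} \<Longrightarrow> y \<in> {1..6} \<Longrightarrow> y < x \<Longrightarrow> wedge (\<eta> x) (wedge (\<eta> y) W) = - wedge (\<eta> y) (wedge (\<eta> x) W)"
  by (intro wedge_swap1 eta_deg)
lemma swap_eta2: "x \<in> {1..6} \<Longrightarrow> y \<in> {1..6} \<Longrightarrow> y < x \<Longrightarrow> wedge (\<eta> x) (\<eta> y) = - wedge (\<eta> y) (\<eta> x)"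
  by (intro wedge_anti1 eta_deg)
lemma self_eta: "x \<in> {1..6} \<Longrightarrow> wedge (\<eta> x) (wedge (\<eta> x) W) = 0"
  by (intro wedge_self1' eta_deg)
lemma self_eta2: "x \<in> {1..6} \<Longrightarrow> wedge (\<eta> x) (\<eta> x) = 0"
  by (intro wedge_self1 eta_deg)

lemma numeral_times_form: "numeral k * (w::form) = numeral k *\<^sub>R w"
  by (simp add: vec_eq_iff)

lemmas norm_rules = numeral_times_form swap_eta swap_eta2 self_eta self_eta2 wedge_assoc wedge_add wedge_diff

lemma coord_eqs:
  fixes \<alpha> \<beta> :: "nat \<Rightarrow> real"
  assumes a: "a = \<alpha> 1 *\<^sub>R \<eta> 1 + \<alpha> 2 *\<^sub>R \<eta> 2 + \<alpha> 3 *\<^sub>R \<eta> 3 + \<alpha> 4 *\<^sub>R \<eta> 4 + \<alpha> 5 *\<^sub>R \<eta> 5 + \<alpha> 6 *\<^sub>R \<eta> 6"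
    and b: "b = \<beta> 1 *\<^sub>R \<eta> 1 + \<beta> 2 *\<^sub>R \<eta> 2 + \<beta> 3 *\<^sub>R \<eta> 3 + \<beta> 4 *\<^sub>R \<eta> 4 + \<beta> 5 *\<^sub>R \<eta> 5 + \<beta> 6 *\<^sub>R \<eta> 6"
    and v: "wedge (\<eta> (Suc 0)) (wedge (\<eta> 2) (wedge (\<eta> 3) (wedge (\<eta> 4) (wedge (\<eta> 5) (\<eta> 6))))) $ K0 = v"
    and v0: "v \<noteq> 0"
    and h1: "wedge (wedge a b) (wedgel [\<eta> 1, \<eta> 3, \<eta> 5] - wedgel [\<eta> 1, \<eta> 4, \<eta> 6] - wedgel [\<eta> 2, \<eta> 3, \<eta> 6] - wedgel [\<eta> 2, \<eta> 4, \<eta> 5]) = 0"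
    and h2: "wedge (wedge a b) (wedge (wedge (\<eta> 1) (\<eta> 2) + wedge (\<eta> 3) (\<eta> 4) + wedge (\<eta> 5) (\<eta> 6))
                                      (wedge (\<eta> 1) (\<eta> 2) + wedge (\<eta> 3) (\<eta> 4) + wedge (\<eta> 5) (\<eta> 6))) = 0"
  shows "\<forall>m n. \<alpha> m * \<beta> n - \<alpha> n * \<beta> m = 0 \<or> m \<notin> {1..6} \<or> n \<notin> {1..6}"
proof -
  define \<mu> where "\<mu> m n = \<alpha> m * \<beta> n - \<alpha> n * \<beta> m" for m n
  let ?ab = "wedge a b"
  let ?\<psi> = "wedgel [\<eta> 1, \<eta> 3, \<eta> 5] - wedgel [\<eta> 1, \<eta> 4, \<eta> 6] - wedgel [\<eta> 2, \<eta> 3, \<eta> 6] - wedgel [\<eta> 2, \<eta> 4, \<eta> 5]"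
  have z: "(wedge (wedge ?ab ?\<psi>) (\<eta> j)) $ K0 = 0" for j using h1 by simp
  from z[of 1] have "(\<mu> 3 6 + \<mu> 4 5) * v = 0" unfolding a b \<mu>_def by (simp add: norm_rules v) algebra
  then have e1: "\<mu> 3 6 + \<mu> 4 5 = 0" using v0 by simp
  from z[of 2] have "(\<mu> 3 5 - \<mu> 4 6) * v = 0" unfolding a b \<mu>_def by (simp add: norm_rules v) algebra
  then have e2: "\<mu> 3 5 - \<mu> 4 6 = 0" using v0 by simp
  from z[of 3] have "(\<mu> 1 6 + \<mu> 2 5) * v = 0" unfolding a b \<mu>_def by (simp add: norm_rules v) algebra
  then have e3: "\<mu> 1 6 + \<mu> 2 5 = 0" using v0 by simp
  from z[of 4] have "(\<mu> 1 5 - \<mu> 2 6) * v = 0" unfolding a b \<mu>_def by (simp add: norm_rules v) algebra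
  then have e4: "\<mu> 1 5 - \<mu> 2 6 = 0" using v0 by simp
  from z[of 5] have "(\<mu> 1 4 + \<mu> 2 3) * v = 0" unfolding a b \<mu>_def by (simp add: norm_rules v) algebra
  then have e5: "\<mu> 1 4 + \<mu> 2 3 = 0" using v0 by simp
  from z[of 6] have "(\<mu> 1 3 - \<mu> 2 4) * v = 0" unfolding a b \<mu>_def by (simp add: norm_rules v) algebra
  then have e6: "\<mu> 1 3 - \<mu> 2 4 = 0" using v0 by simp
  have "(wedge ?ab (wedge (wedge (\<eta> 1) (\<eta> 2) + wedge (\<eta> 3) (\<eta> 4) + wedge (\<eta> 5) (\<eta> 6))
                                      (wedge (\<eta> 1) (\<eta> 2) + wedge (\<eta> 3) (\<eta> 4) + wedge (\<eta> 5) (\<eta> 6)))) $ K0 = 0"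
    using h2 by simp
  then have "(\<mu> 1 2 + \<mu> 3 4 + \<mu> 5 6) * v = 0" unfolding a b \<mu>_def by (simp add: norm_rules v) algebra
  then have e7: "\<mu> 1 2 + \<mu> 3 4 + \<mu> 5 6 = 0" using v0 by simp
  have id: "(\<mu> 1 2)\<^sup>2 + (\<mu> 1 3)\<^sup>2 + (\<mu> 1 4)\<^sup>2 + (\<mu> 1 5)\<^sup>2 + (\<mu> 1 6)\<^sup>2 + (\<mu> 2 3)\<^sup>2 + (\<mu> 2 4)\<^sup>2 + (\<mu> 2 5)\<^sup>2 + (\<mu> 2 6)\<^sup>2 + (\<mu> 3 4)\<^sup>2 + (\<mu> 3 5)\<^sup>2 + (\<mu> 3 6)\<^sup>2 + (\<mu> 4 5)\<^sup>2 + (\<mu> 4 6)\<^sup>2 + (\<mu> 5 6)\<^sup>2 = (\<mu> 3 6 + \<mu> 4 5)\<^sup>2 + (\<mu> 3 5 - \<mu> 4 6)\<^sup>2 + (\<mu> 1 6 + \<mu> 2 5)\<^sup>2 + (\<mu> 1 5 - \<mu> 2 6)\<^sup>2 + (\<mu> 1 4 + \<mu> 2 3)\<^sup>2 + (\<mu> 1 3 - \<mu> 2 4)\<^sup>2 + (\<mu> 1 2 + \<mu> 3 4 + \<mu> 5 6)\<^sup>2"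
    unfolding \<mu>_def by (simp add: power2_eq_square algebra_simps)
  then have sq0: "(\<mu> 1 2)\<^sup>2 + (\<mu> 1 3)\<^sup>2 + (\<mu> 1 4)\<^sup>2 + (\<mu> 1 5)\<^sup>2 + (\<mu> 1 6)\<^sup>2 + (\<mu> 2 3)\<^sup>2 + (\<mu> 2 4)\<^sup>2 + (\<mu> 2 5)\<^sup>2 + (\<mu> 2 6)\<^sup>2 + (\<mu> 3 4)\<^sup>2 + (\<mu> 3 5)\<^sup>2 + (\<mu> 3 6)\<^sup>2 + (\<mu> 4 5)\<^sup>2 + (\<mu> 4 6)\<^sup>2 + (\<mu> 5 6)\<^sup>2 = 0" using e1 e2 e3 e4 e5 e6 e7 by simp
  have all0: "\<mu> 1 2 = 0 \<and> \<mu> 1 3 = 0 \<and> \<mu> 1 4 = 0 \<and> \<mu> 1 5 = 0 \<and> \<mu> 1 6 = 0 \<and> \<mu> 2 3 = 0 \<and> \<mu> 2 4 = 0 \<and> \<mu> 2 5 = 0 \<and> \<mu> 2 6 = 0 \<and> \<mu> 3 4 = 0 \<and> \<mu> 3 5 = 0 \<and> \<mu> 3 6 = 0 \<and> \<mu> 4 5 = 0 \<and> \<mu> 4 6 = 0 \<and> \<mu> 5 6 = 0"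
    using sq0 by (simp add: add_nonneg_eq_0_iff)
  show ?thesis
  proof (intro allI)
    fix m n :: nat
    show "\<alpha> m * \<beta> n - \<alpha> n * \<beta> m = 0 \<or> m \<notin> {1..6} \<or> n \<notin> {1..6}"
    proof (cases "m \<in> {1..6} \<and> n \<in> {1..6}")
      case True
      then have "m \<in> {1,2,3,4,5,6}" "n \<in> {1,2,3,4,5,6}" by auto
      then have "\<mu> m n = 0" using all0 unfolding \<mu>_def by (auto simp: algebra_simps)
      then show ?thesis unfolding \<mu>_def by simp
    qed auto
  qed
qed
end


lemma sum16: "(\<Sum>m\<in>{1..6::nat}. f m) = f 1 + f 2 + f 3 + f 4 + f 5 + f 6"
proof -
  have "{1..6::nat} = {1, 2, 3, 4, 5, 6}" by auto
  then show ?thesis by (simp add: add.assoc)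
qed

lemma coords:
  assumes "x \<in> span (\<eta> ` {1..6::nat})" "inj_on \<eta> {1..6}"
  shows "\<exists>\<alpha>::nat \<Rightarrow> real. x = \<alpha> 1 *\<^sub>R \<eta> 1 + \<alpha> 2 *\<^sub>R \<eta> 2 + \<alpha> 3 *\<^sub>R \<eta> 3 + \<alpha> 4 *\<^sub>R \<eta> 4 + \<alpha> 5 *\<^sub>R \<eta> 5 + \<alpha> 6 *\<^sub>R (\<eta> 6 :: form)"
proof -
  obtain u where "x = (\<Sum>v\<in>\<eta> ` {1..6}. u v *\<^sub>R v)"
    using assms(1) span_finite[of "\<eta> ` {1..6}"] by auto
  also have "\<dots> = (\<Sum>m\<in>{1..6}. u (\<eta> m) *\<^sub>R \<eta> m)"
    using sum.reindex[OF assms(2), of "\<lambda>v. u v *\<^sub>R v"] by simp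
  finally show ?thesis unfolding sum16 by (intro exI[of _ "\<lambda>m. u (\<eta> m)"])
qed



theorem theorem2:
  fixes c :: "6 \<Rightarrow> 6 \<Rightarrow> 6 \<Rightarrow> real" and V1 V2 :: "form set"
  assumes "lie_algebra c"
    and "coherent_splitting c V1 V2"
    and "hdim c V1 V2 0 4 = 0"
    and "hdim c V1 V2 0 3 = 0"
  shows "\<not> (\<exists>\<omega> \<psi>. half_flat c \<omega> \<psi>)"
proof
  assume "\<exists>\<omega> \<psi>. half_flat c \<omega> \<psi>"
  then obtain \<omega> \<psi> where hf: "half_flat c \<omega> \<psi>" by blast
  have coh: "coherent_splitting c V1 V2" by fact
  obtain \<eta> :: "nat \<Rightarrow> form" where
    inj: "inj_on \<eta> {1..6}" and eta1: "\<eta> ` {1..6} \<subseteq> forms_deg 1" and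
    sp: "span (\<eta> ` {1..6}) = forms_deg 1" and
    om: "\<omega> = wedge (\<eta> 1) (\<eta> 2) + wedge (\<eta> 3) (\<eta> 4) + wedge (\<eta> 5) (\<eta> 6)" and
    ps: "\<psi> = wedgel [\<eta> 1, \<eta> 3, \<eta> 5] - wedgel [\<eta> 1, \<eta> 4, \<eta> 6]
         - wedgel [\<eta> 2, \<eta> 3, \<eta> 6] - wedgel [\<eta> 2, \<eta> 4, \<eta> 5]"
    using hf unfolding half_flat_def SU3_structure_def by blast
  have dom: "wedge (CE_d c \<omega>) \<omega> = 0" and dps: "CE_d c \<psi> = 0"
    using hf unfolding half_flat_def by auto
  interpret etaloc \<eta> by (unfold_locales) (rule eta1)
  have e1: "\<eta> m \<in> forms_deg 1" if "m \<in> {1..6}" for m using eta1 that by auto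
  have w3: "wedgel [\<eta> i, \<eta> j, \<eta> k] \<in> forms_deg 3" if "i \<in> {1..6}" "j \<in> {1..6}" "k \<in> {1..6}" for i j k
    using wedgel_deg[of "[\<eta> i, \<eta> j, \<eta> k]"] e1 that by (auto simp: numeral_3_eq_3)
  have psi3: "\<psi> \<in> forms_deg 3" unfolding ps
    by (intro subspace_diff[OF subspace_forms_deg] w3) auto
  have w2: "wedge (\<eta> i) (\<eta> j) \<in> forms_deg 2" if "i \<in> {1..6}" "j \<in> {1..6}" for i j
    using wedge_deg[OF e1 e1, of i j] that by (simp add: numeral_2_eq_2)
  have om2: "\<omega> \<in> forms_deg 2" unfolding om
    by (intro subspace_add[OF subspace_forms_deg] w2) auto
  have om4: "wedge \<omega> \<omega> \<in> forms_deg 4" using wedge_deg[OF om2 om2] by simp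
  have dom4: "CE_d c (wedge \<omega> \<omega>) = 0" using d_square2[OF om2] dom by simp
  have psiF: "\<psi> \<in> Filt V1 V2 3 1"
    by (rule closed_sub_Filt1[OF coh assms(4)]) (use psi3 dps in \<open>auto simp: closed_forms_def\<close>)
  have omF: "wedge \<omega> \<omega> \<in> Filt V1 V2 4 1"
    by (rule closed_sub_Filt1[OF coh assms(3)]) (use om4 dom4 in \<open>auto simp: closed_forms_def\<close>)
  obtain a b where ab: "a \<in> V1" "b \<in> V1" "a \<noteq> b" "independent {a, b}" "V1 \<subseteq> span {a, b}"
    using V1_basis[OF coh] by blast
  have a1: "a \<in> forms_deg 1" and b1: "b \<in> forms_deg 1" using ab coh_V(1)[OF coh] by auto
  have k1: "wedge (wedge a b) \<psi> = 0" by (rule kill_Filt1[OF a1 b1 ab(5) psiF])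
  have k2: "wedge (wedge a b) (wedge \<omega> \<omega>) = 0" by (rule kill_Filt1[OF a1 b1 ab(5) omF])
  obtain \<alpha> :: "nat \<Rightarrow> real" where
    a: "a = \<alpha> 1 *\<^sub>R \<eta> 1 + \<alpha> 2 *\<^sub>R \<eta> 2 + \<alpha> 3 *\<^sub>R \<eta> 3 + \<alpha> 4 *\<^sub>R \<eta> 4 + \<alpha> 5 *\<^sub>R \<eta> 5 + \<alpha> 6 *\<^sub>R \<eta> 6"
    using coords[OF _ inj, of a] a1 sp by auto
  obtain \<beta> :: "nat \<Rightarrow> real" where
    b: "b = \<beta> 1 *\<^sub>R \<eta> 1 + \<beta> 2 *\<^sub>R \<eta> 2 + \<beta> 3 *\<^sub>R \<eta> 3 + \<beta> 4 *\<^sub>R \<eta> 4 + \<beta> 5 *\<^sub>R \<eta> 5 + \<beta> 6 *\<^sub>R \<eta> 6"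
    using coords[OF _ inj, of b] b1 sp by auto
  have "vol \<noteq> 0" by (rule vol_nonzero) (use sp in blast)
  then obtain K0 where K0: "vol $ K0 \<noteq> 0" by (auto simp: vec_eq_iff)
  have v: "wedge (\<eta> (Suc 0)) (wedge (\<eta> 2) (wedge (\<eta> 3) (wedge (\<eta> 4) (wedge (\<eta> 5) (\<eta> 6))))) $ K0 = vol $ K0"
    by (simp add: vol_def E_def)
  have mu: "\<forall>m n. \<alpha> m * \<beta> n - \<alpha> n * \<beta> m = 0 \<or> m \<notin> {1..6} \<or> n \<notin> {1..6}"
    by (rule coord_eqs[OF a b v K0 k1[unfolded ps] k2[unfolded om]])
  have "a \<noteq> 0" using ab(4) dependent_zero by blast
  have "\<exists>m\<in>{1..6}. \<alpha> m \<noteq> 0"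
  proof (rule ccontr)
    assume "\<not> (\<exists>m\<in>{1..6}. \<alpha> m \<noteq> 0)"
    then have "\<alpha> 1 = 0" "\<alpha> 2 = 0" "\<alpha> 3 = 0" "\<alpha> 4 = 0" "\<alpha> 5 = 0" "\<alpha> 6 = 0" by auto
    then have "a = 0" unfolding a by simp
    with \<open>a \<noteq> 0\<close> show False by simp
  qed
  then obtain m where m: "m \<in> {1..6}" "\<alpha> m \<noteq> 0" by blast
  define r where "r = \<beta> m / \<alpha> m"
  have bn: "\<beta> n = r * \<alpha> n" if "n \<in> {1..6}" for n
  proof -
    have "\<alpha> m * \<beta> n - \<alpha> n * \<beta> m = 0" using mu m that by blast
    then show ?thesis using m(2) unfolding r_def by (simp add: field_simps)
  qed
  have "b = r *\<^sub>R a" unfolding a b by (simp add: bn scaleR_add_right)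
  then have "b \<in> span ({a, b} - {b})" using ab(3) by (simp add: span_mul span_base insert_Diff_if)
  then have "dependent {a, b}" unfolding dependent_def by blast
  then show False using ab(4) by simp
qed

end
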